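(* Let $(Y_i,D_i,Z_i,X_i)$, $i=1,\dots,N$, be data with $Y_i\in\mathbb{R}$, $D_i,Z_i\in\{0,1\}$, $X_i\in\mathbb{R}^k$, where $X_i$ includes a constant component (equal to $1$ for all $i$). Let $F(x,\alpha)\in(0,1)$ be a parametric model for the instrument propensity score and let $\hat\alpha_{cb}$ satisfy the covariate balancing equations $$\frac1N\sum_{i=1}^N X_i\,\frac{Z_i-F(X_i,\hat\alpha_{cb})}{F(X_i,\hat\alpha_{cb})\big(1-F(X_i,\hat\alpha_{cb})\big)}=0 .$$ Write $\hat p_i=F(X_i,\hat\alpha_{cb})$, $\hat\kappa_{i1}=D_i\frac{Z_i-\hat p_i}{\hat p_i(1-\hat p_i)}$, $\hat\kappa_{i0}=(1-D_i)\frac{(1-Z_i)-(1-\hat p_i)}{\hat p_i(1-\hat p_i)}$, and define $$\tilde\tau_{t}=\Big[\sum_i\frac{D_iZ_i}{\hat p_i}-\sum_i\frac{D_i(1-Z_i)}{1-\hat p_i}\Big]^{-1}\Big[\sum_i\frac{Y_iZ_i}{\hat p_i}-\sum_i\frac{Y_i(1-Z_i)}{1-\hat p_i}\Big],\qquad \tilde\tau_{a,1}=\Big[\sum_i\hat\kappa_{i1}\Big]^{-1}\sum_i Y_i\frac{Z_i-\hat p_i}{\hat p_i(1-\hat p_i)},$$ $$\tilde\tau_{a,0}=\Big[\sum_i\hat\kappa_{i0}\Big]^{-1}\sum_i Y_i\frac{Z_i-\hat p_i}{\hat p_i(1-\hat p_i)},\qquad \tilde\tau_{a,10}=\Big[\sum_i\hat\kappa_{i1}\Big]^{-1}\sum_i\hat\kappa_{i1}Y_i-\Big[\sum_i\hat\kappa_{i0}\Big]^{-1}\sum_i\hat\kappa_{i0}Y_i,$$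 $$\hat\tau_{cb}=\frac{\big[\sum_i\frac{Z_i}{\hat p_i}\big]^{-1}\sum_i\frac{Y_iZ_i}{\hat p_i}-\big[\sum_i\frac{1-Z_i}{1-\hat p_i}\big]^{-1}\sum_i\frac{Y_i(1-Z_i)}{1-\hat p_i}}{\big[\sum_i\frac{Z_i}{\hat p_i}\big]^{-1}\sum_i\frac{D_iZ_i}{\hat p_i}-\big[\sum_i\frac{1-Z_i}{1-\hat p_i}\big]^{-1}\sum_i\frac{D_i(1-Z_i)}{1-\hat p_i}}$$ (assuming the denominators are nonzero). Then $\tilde\tau_t$ ($=\tilde\tau_{a,1}$), $\tilde\tau_{a,0}$ and $\tilde\tau_{a,10}$ are numerically identical and equal to $\hat\tau_{cb}$.
   Context: $\hat\alpha_{cb}$ is the just-identified covariate balancing estimator of the propensity score parameter (Imai–Ratkovic type), defined by the displayed sample moment equations. *)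

theory Defs
  imports "HOL-Analysis.Analysis"
begin

text \<open>Observations are indexed by i = 1..N; p i stands for the fitted
instrument propensity score F(X_i, alpha_cb).  [.]^{-1} is rendered as inverse.\<close>

definition kappa1 :: "(nat \<Rightarrow> real) \<Rightarrow> (nat \<Rightarrow> real) \<Rightarrow> (nat \<Rightarrow> real) \<Rightarrow> nat \<Rightarrow> real" where
  "kappa1 D Z p i = D i * ((Z i - p i) / (p i * (1 - p i)))"

definition kappa0 :: "(nat \<Rightarrow> real) \<Rightarrow> (nat \<Rightarrow> real) \<Rightarrow> (nat \<Rightarrow> real) \<Rightarrow> nat \<Rightarrow> real" where
  "kappa0 D Z p i = (1 - D i) * (((1 - Z i) - (1 - p i)) / (p i * (1 - p i)))"

definition tau_t :: "nat \<Rightarrow> (nat \<Rightarrow> real) \<Rightarrow> (nat \<Rightarrow> real) \<Rightarrow> (nat \<Rightarrow> real) \<Rightarrow> (nat \<Rightarrow> real) \<Rightarrow> real" where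
  "tau_t N Y D Z p =
     inverse ((\<Sum>i=1..N. D i * Z i / p i) - (\<Sum>i=1..N. D i * (1 - Z i) / (1 - p i)))
     * ((\<Sum>i=1..N. Y i * Z i / p i) - (\<Sum>i=1..N. Y i * (1 - Z i) / (1 - p i)))"

definition tau_a1 :: "nat \<Rightarrow> (nat \<Rightarrow> real) \<Rightarrow> (nat \<Rightarrow> real) \<Rightarrow> (nat \<Rightarrow> real) \<Rightarrow> (nat \<Rightarrow> real) \<Rightarrow> real" where
  "tau_a1 N Y D Z p =
     inverse (\<Sum>i=1..N. kappa1 D Z p i)
     * (\<Sum>i=1..N. Y i * ((Z i - p i) / (p i * (1 - p i))))"

definition tau_a0 :: "nat \<Rightarrow> (nat \<Rightarrow> real) \<Rightarrow> (nat \<Rightarrow> real) \<Rightarrow> (nat \<Rightarrow> real) \<Rightarrow> (nat \<Rightarrow> real) \<Rightarrow> real" where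
  "tau_a0 N Y D Z p =
     inverse (\<Sum>i=1..N. kappa0 D Z p i)
     * (\<Sum>i=1..N. Y i * ((Z i - p i) / (p i * (1 - p i))))"

definition tau_a10 :: "nat \<Rightarrow> (nat \<Rightarrow> real) \<Rightarrow> (nat \<Rightarrow> real) \<Rightarrow> (nat \<Rightarrow> real) \<Rightarrow> (nat \<Rightarrow> real) \<Rightarrow> real" where
  "tau_a10 N Y D Z p =
     inverse (\<Sum>i=1..N. kappa1 D Z p i) * (\<Sum>i=1..N. kappa1 D Z p i * Y i)
     - inverse (\<Sum>i=1..N. kappa0 D Z p i) * (\<Sum>i=1..N. kappa0 D Z p i * Y i)"

definition tau_cb :: "nat \<Rightarrow> (nat \<Rightarrow> real) \<Rightarrow> (nat \<Rightarrow> real) \<Rightarrow> (nat \<Rightarrow> real) \<Rightarrow> (nat \<Rightarrow> real) \<Rightarrow> real" where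
  "tau_cb N Y D Z p =
     (inverse (\<Sum>i=1..N. Z i / p i) * (\<Sum>i=1..N. Y i * Z i / p i)
       - inverse (\<Sum>i=1..N. (1 - Z i) / (1 - p i)) * (\<Sum>i=1..N. Y i * (1 - Z i) / (1 - p i)))
     / (inverse (\<Sum>i=1..N. Z i / p i) * (\<Sum>i=1..N. D i * Z i / p i)
       - inverse (\<Sum>i=1..N. (1 - Z i) / (1 - p i)) * (\<Sum>i=1..N. D i * (1 - Z i) / (1 - p i)))"

end

theory Submission
  imports Defs
begin

theorem proposition2:
  fixes N :: nat
    and Y D Z :: "nat \<Rightarrow> real"
    and X :: "nat \<Rightarrow> real ^ 'k"
    and F :: "real ^ 'k \<Rightarrow> 'a \<Rightarrow> real"
    and alpha_cb :: 'a
    and c :: 'k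
  assumes D01: "\<forall>i\<in>{1..N}. D i \<in> {0, 1}"
    and Z01: "\<forall>i\<in>{1..N}. Z i \<in> {0, 1}"
    and const: "\<forall>i\<in>{1..N}. X i $ c = 1"
    and F01: "\<forall>x a. 0 < F x a \<and> F x a < 1"
    and balance: "(1 / real N) *\<^sub>R
        (\<Sum>i=1..N. ((Z i - F (X i) alpha_cb) /
                     (F (X i) alpha_cb * (1 - F (X i) alpha_cb))) *\<^sub>R X i) = 0"
    and nz_t: "(\<Sum>i=1..N. D i * Z i / F (X i) alpha_cb)
               - (\<Sum>i=1..N. D i * (1 - Z i) / (1 - F (X i) alpha_cb)) \<noteq> 0"
    and nz_k1: "(\<Sum>i=1..N. kappa1 D Z (\<lambda>i. F (X i) alpha_cb) i) \<noteq> 0"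
    and nz_k0: "(\<Sum>i=1..N. kappa0 D Z (\<lambda>i. F (X i) alpha_cb) i) \<noteq> 0"
    and nz_z1: "(\<Sum>i=1..N. Z i / F (X i) alpha_cb) \<noteq> 0"
    and nz_z0: "(\<Sum>i=1..N. (1 - Z i) / (1 - F (X i) alpha_cb)) \<noteq> 0"
    and nz_cb: "inverse (\<Sum>i=1..N. Z i / F (X i) alpha_cb)
                  * (\<Sum>i=1..N. D i * Z i / F (X i) alpha_cb)
               - inverse (\<Sum>i=1..N. (1 - Z i) / (1 - F (X i) alpha_cb))
                  * (\<Sum>i=1..N. D i * (1 - Z i) / (1 - F (X i) alpha_cb)) \<noteq> 0"
  shows "tau_t N Y D Z (\<lambda>i. F (X i) alpha_cb) = tau_a1 N Y D Z (\<lambda>i. F (X i) alpha_cb)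
       \<and> tau_a0 N Y D Z (\<lambda>i. F (X i) alpha_cb) = tau_t N Y D Z (\<lambda>i. F (X i) alpha_cb)
       \<and> tau_a10 N Y D Z (\<lambda>i. F (X i) alpha_cb) = tau_t N Y D Z (\<lambda>i. F (X i) alpha_cb)
       \<and> tau_t N Y D Z (\<lambda>i. F (X i) alpha_cb) = tau_cb N Y D Z (\<lambda>i. F (X i) alpha_cb)"
proof -
  define p where "p = (\<lambda>i. F (X i) alpha_cb)"
  define w where "w = (\<lambda>i. (Z i - p i) / (p i * (1 - p i)))"
  have p01: "0 < p i \<and> p i < 1" for i using F01 by (simp add: p_def)
  have wid: "w i = Z i / p i - (1 - Z i) / (1 - p i)" for i
  proof -
    have "p i \<noteq> 0" "1 - p i \<noteq> 0" using p01[of i] by auto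
    then show ?thesis unfolding w_def by (simp add: field_simps)
  qed
  have N0: "N \<noteq> 0" using nz_k1 by (cases "N = 0") auto
  have "(\<Sum>i=1..N. w i *\<^sub>R X i) = 0"
    using balance N0 by (simp add: w_def p_def)
  then have "(\<Sum>i=1..N. w i *\<^sub>R X i) $ c = 0" by simp
  then have "(\<Sum>i=1..N. w i * X i $ c) = 0" by simp
  moreover have "(\<Sum>i=1..N. w i * X i $ c) = (\<Sum>i=1..N. w i)"
    using const by (intro sum.cong) auto
  ultimately have sw: "(\<Sum>i=1..N. w i) = 0" by simp
  have S: "(\<Sum>i=1..N. Z i / p i) = (\<Sum>i=1..N. (1 - Z i) / (1 - p i))"
    using sw by (simp add: wid sum_subtractf)
  define K where "K = (\<Sum>i=1..N. D i * w i)"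
  define A where "A = (\<Sum>i=1..N. Y i * w i)"
  have tt: "tau_t N Y D Z p = inverse K * A"
  proof -
    have "(\<Sum>i=1..N. D i * Z i / p i) - (\<Sum>i=1..N. D i * (1 - Z i) / (1 - p i)) = K"
      unfolding K_def by (simp add: wid sum_subtractf[symmetric] algebra_simps)
    moreover have "(\<Sum>i=1..N. Y i * Z i / p i) - (\<Sum>i=1..N. Y i * (1 - Z i) / (1 - p i)) = A"
      unfolding A_def by (simp add: wid sum_subtractf[symmetric] algebra_simps)
    ultimately show ?thesis unfolding tau_t_def by simp
  qed
  have k1: "kappa1 D Z p i = D i * w i" for i by (simp add: kappa1_def w_def)
  have k0: "kappa0 D Z p i = D i * w i - w i" for i
  proof -
    have "kappa0 D Z p i = (1 - D i) * (- w i)"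
      unfolding kappa0_def w_def by (simp add: minus_divide_left)
    then show ?thesis by (simp add: algebra_simps)
  qed
  have sk1: "(\<Sum>i=1..N. kappa1 D Z p i) = K" by (simp add: k1 K_def)
  have sk0: "(\<Sum>i=1..N. kappa0 D Z p i) = K" using sw by (simp add: k0 K_def sum_subtractf)
  have ta1: "tau_a1 N Y D Z p = inverse K * A"
    unfolding tau_a1_def sk1 A_def w_def by (simp add: mult.commute)
  have ta0: "tau_a0 N Y D Z p = inverse K * A"
    unfolding tau_a0_def sk0 A_def w_def by (simp add: mult.commute)
  have ta10: "tau_a10 N Y D Z p = inverse K * A"
  proof -
    have e1: "(\<Sum>i=1..N. kappa1 D Z p i * Y i) = (\<Sum>i=1..N. D i * w i * Y i)" by (simp add: k1)
    have e0: "(\<Sum>i=1..N. kappa0 D Z p i * Y i) = (\<Sum>i=1..N. D i * w i * Y i) - A"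
      by (simp add: k0 A_def sum_subtractf[symmetric] algebra_simps)
    show ?thesis unfolding tau_a10_def sk1 sk0 e1 e0 by (simp add: algebra_simps)
  qed
  define S1 where "S1 = (\<Sum>i=1..N. Z i / p i)"
  have S1nz: "S1 \<noteq> 0" using nz_z1 by (simp add: S1_def p_def)
  have tcb: "tau_cb N Y D Z p = inverse K * A"
  proof -
    have "tau_cb N Y D Z p = (inverse S1 * ((\<Sum>i=1..N. Y i * Z i / p i) - (\<Sum>i=1..N. Y i * (1 - Z i) / (1 - p i))))
       / (inverse S1 * ((\<Sum>i=1..N. D i * Z i / p i) - (\<Sum>i=1..N. D i * (1 - Z i) / (1 - p i))))"
      unfolding tau_cb_def S[symmetric] S1_def by (simp add: algebra_simps)
    also have "\<dots> = (inverse S1 * A) / (inverse S1 * K)"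
      unfolding A_def K_def by (simp add: wid sum_subtractf[symmetric] algebra_simps)
    also have "\<dots> = inverse K * A" using S1nz by (simp add: field_simps)
    finally show ?thesis .
  qed
  show ?thesis using tt ta1 ta0 ta10 tcb unfolding p_def by simp
qed

end
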